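(* Let $p,q,e$ be positive integers. If $n>1$ is the length of a cycle of the Cat map over $\mathbb{Z}_{2^e}$, then $H_n$ is even.
   Context: $\mathbf{C}=\begin{bmatrix}1 & p\\ q & 1+pq\end{bmatrix}$; the Cat map over $\mathbb{Z}_{2^e}$ is the bijection $v\mapsto\mathbf{C}v\bmod 2^e$ of $\mathbb{Z}_{2^e}^2$, and a cycle of length $n$ is the orbit of a point $v$ for which $n$ is the least positive integer with $\mathbf{C}^nv\equiv v\pmod{2^e}$. $A=pq+2$, $B=\sqrt{A^2-4}$, $H_n=\frac{1}{B}\left(\left(\frac{A+B}{2}\right)^n-\left(\frac{A-B}{2}\right)^n\right)$ (an integer). *)

theory Defs
  imports Complex_Main
begin

text \<open>The Cat map over Z_(2^e): v = (x,y) is mapped to C v mod 2^e with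
  C = [[1, p], [q, 1 + p q]]. Points of Z_(2^e)^2 are represented by pairs of
  integers in {0..<2^e}.\<close>

definition cat_map :: "int \<Rightarrow> int \<Rightarrow> nat \<Rightarrow> int \<times> int \<Rightarrow> int \<times> int" where
  "cat_map p q e v = ((fst v + p * snd v) mod 2 ^ e,
                      (q * fst v + (1 + p * q) * snd v) mod 2 ^ e)"

definition cat_points :: "nat \<Rightarrow> (int \<times> int) set" where
  "cat_points e = {0..<2 ^ e} \<times> {0..<2 ^ e}"

definition is_cycle_length :: "int \<Rightarrow> int \<Rightarrow> nat \<Rightarrow> nat \<Rightarrow> bool" where
  "is_cycle_length p q e n \<longleftrightarrow>
     (\<exists>v \<in> cat_points e. 0 < n \<and> (cat_map p q e ^^ n) v = v \<and>
        (\<forall>m. 0 < m \<and> m < n \<longrightarrow> (cat_map p q e ^^ m) v \<noteq> v))"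

definition catA :: "int \<Rightarrow> int \<Rightarrow> real" where
  "catA p q = real_of_int (p * q + 2)"

definition catB :: "int \<Rightarrow> int \<Rightarrow> real" where
  "catB p q = sqrt ((catA p q)\<^sup>2 - 4)"

definition catH :: "int \<Rightarrow> int \<Rightarrow> nat \<Rightarrow> real" where
  "catH p q n = (1 / catB p q) *
     (((catA p q + catB p q) / 2) ^ n - ((catA p q - catB p q) / 2) ^ n)"

end

theory Submission
  imports Defs
begin

fun hh :: "int \<Rightarrow> nat \<Rightarrow> int" where
  "hh A 0 = 0"
| "hh A (Suc 0) = 1"
| "hh A (Suc (Suc n)) = A * hh A (Suc n) - hh A n"

lemma odd_coprime_pow2:
  fixes a :: int assumes "odd a" shows "coprime a (2 ^ e)"
  using assms by (simp add: coprime_power_right_iff coprime_commute)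

lemma dvd_cancel_odd:
  fixes a b :: int assumes "odd a" "2 ^ e dvd a * b" shows "2 ^ e dvd b"
proof -
  have "coprime (2 ^ e) a" using odd_coprime_pow2[OF assms(1)] by (simp add: coprime_commute)
  then show ?thesis using assms(2) coprime_dvd_mult_right_iff by blast
qed

lemma binet:
  fixes al be B :: real and A :: int
  assumes s: "al + be = of_int A" and p: "al * be = 1" and d: "al - be = B"
  shows "al ^ n - be ^ n = B * of_int (hh A n) \<and> al ^ Suc n - be ^ Suc n = B * of_int (hh A (Suc n))"
proof (induction n)
  case 0
  then show ?case using d by simp
next
  case (Suc n)
  have e: "al ^ Suc (Suc n) - be ^ Suc (Suc n) = (al + be) * (al ^ Suc n - be ^ Suc n) - (al * be) * (al ^ n - be ^ n)"
    by (simp add: algebra_simps)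
  have "al ^ Suc (Suc n) - be ^ Suc (Suc n) = of_int A * (B * of_int (hh A (Suc n))) - B * of_int (hh A n)"
    unfolding e s p using Suc by simp
  also have "\<dots> = B * of_int (hh A (Suc (Suc n)))" by (simp add: algebra_simps)
  finally show ?case using Suc by simp
qed

lemma catH_int:
  fixes p q :: int assumes "p > 0" "q > 0"
  shows "catH p q n = of_int (hh (p * q + 2) n)"
proof -
  define A where "A = catA p q"
  define B where "B = catB p q"
  have A: "A = of_int (p * q + 2)" unfolding A_def catA_def by simp
  have "p * q \<ge> 1" using assms using mult_pos_pos[OF assms] by linarith
  then have "A \<ge> 3" unfolding A by linarith
  then have "A * A \<ge> 3 * 3" using mult_mono[of 3 A 3 A] by simp
  then have A4: "A\<^sup>2 - 4 > 0" by (simp add: power2_eq_square)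
  have BB: "B\<^sup>2 = A\<^sup>2 - 4" unfolding B_def A_def catB_def using A4 A_def by simp
  have Bpos: "B > 0" unfolding B_def catB_def using A4 A_def by simp
  define al where "al = (A + B) / 2"
  define be where "be = (A - B) / 2"
  have "al * be = (A\<^sup>2 - B\<^sup>2) / 4" unfolding al_def be_def by (simp add: power2_eq_square algebra_simps)
  then have p1: "al * be = 1" using BB by simp
  have "al + be = of_int (p * q + 2)" unfolding al_def be_def A by (simp add: field_simps)
  moreover have "al - be = B" unfolding al_def be_def by (simp add: field_simps)
  ultimately have "al ^ n - be ^ n = B * of_int (hh (p * q + 2) n)" using binet p1 by blast
  then show ?thesis unfolding catH_def using Bpos al_def be_def A_def B_def by (simp add: field_simps)
qed

lemma modlin:
  fixes a b r s m :: int
  shows "(r * (a mod m) + s * (b mod m)) mod m = (r * a + s * b) mod m"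
proof -
  have "(r * (a mod m) + s * (b mod m)) mod m = ((r * (a mod m)) mod m + (s * (b mod m)) mod m) mod m"
    by (simp only: mod_add_eq)
  also have "\<dots> = ((r * a) mod m + (s * b) mod m) mod m" by (simp only: mod_mult_right_eq)
  also have "\<dots> = (r * a + s * b) mod m" by (simp only: mod_add_eq)
  finally show ?thesis .
qed

lemma modlin1:
  fixes a b s m :: int
  shows "(a mod m + s * (b mod m)) mod m = (a + s * b) mod m"
  using modlin[of 1 a m s b] by simp

lemma cat_map_mod:
  fixes a b :: int
  shows "cat_map p q e (a mod 2^e, b mod 2^e) = ((a + p * b) mod 2^e, (q * a + (1 + p*q) * b) mod 2^e)"
  unfolding cat_map_def fst_conv snd_conv modlin modlin1 ..

lemma iter_formula:
  fixes p q x y :: int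
  shows "(cat_map p q e ^^ Suc m) (x, y) =
    ((hh (p*q+2) (Suc m) * (x + p*y) - hh (p*q+2) m * x) mod 2 ^ e,
     (hh (p*q+2) (Suc m) * (q*x + (1+p*q)*y) - hh (p*q+2) m * y) mod 2 ^ e)"
proof (induction m)
  case 0
  then show ?case by (simp add: cat_map_def)
next
  case (Suc m)
  define a where "a = hh (p*q+2) (Suc m) * (x + p*y) - hh (p*q+2) m * x"
  define b where "b = hh (p*q+2) (Suc m) * (q*x + (1+p*q)*y) - hh (p*q+2) m * y"
  have e1: "a + p * b = hh (p*q+2) (Suc (Suc m)) * (x + p*y) - hh (p*q+2) (Suc m) * x"
    unfolding a_def b_def by (simp add: algebra_simps)
  have e2: "q * a + (1 + p*q) * b = hh (p*q+2) (Suc (Suc m)) * (q*x + (1+p*q)*y) - hh (p*q+2) (Suc m) * y"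
    unfolding a_def b_def by (simp add: algebra_simps)
  have "(cat_map p q e ^^ Suc (Suc m)) (x, y) = cat_map p q e (a mod 2^e, b mod 2^e)"
    using Suc by (simp add: a_def b_def)
  also have "\<dots> = ((a + p * b) mod 2^e, (q * a + (1 + p*q) * b) mod 2^e)"
    by (rule cat_map_mod)
  finally show ?case unfolding e1 e2 .
qed

lemma eigen_iter:
  fixes p q x y l :: int
  assumes "0 \<le> x" "x < 2^e" "0 \<le> y" "y < 2^e"
    and d1: "(2::int)^e dvd (x + p*y) - l * x" and d2: "(2::int)^e dvd (q*x + (1+p*q)*y) - l * y"
  shows "(cat_map p q e ^^ m) (x, y) = ((l^m * x) mod 2^e, (l^m * y) mod 2^e)"
proof (induction m)
  case 0
  then show ?case using assms by simp
next
  case (Suc m)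
  have "(cat_map p q e ^^ Suc m) (x, y) = cat_map p q e ((l^m * x) mod 2^e, (l^m * y) mod 2^e)"
    using Suc by simp
  also have "\<dots> = ((l^m * (x + p*y)) mod 2^e, (l^m * (q*x + (1+p*q)*y)) mod 2^e)"
    unfolding cat_map_mod by (simp add: algebra_simps)
  also have "\<dots> = ((l^Suc m * x) mod 2^e, (l^Suc m * y) mod 2^e)"
  proof -
    have "(2::int)^e dvd l^m * ((x + p*y) - l * x)" using d1 by simp
    then have a: "(l^m * (x + p*y)) mod 2^e = (l^Suc m * x) mod 2^e"
      by (simp add: mod_eq_dvd_iff algebra_simps)
    have "(2::int)^e dvd l^m * ((q*x + (1+p*q)*y) - l * y)" using d2 by simp
    then have b: "(l^m * (q*x + (1+p*q)*y)) mod 2^e = (l^Suc m * y) mod 2^e"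
      by (simp add: mod_eq_dvd_iff algebra_simps)
    show ?thesis using a b by simp
  qed
  finally show ?case .
qed

lemma hh_even_parity:
  assumes "even A" shows "even (hh A n) \<longleftrightarrow> even n"
  using assms by (induction A n rule: hh.induct) auto

lemma geom_odd:
  fixes l :: int assumes "odd n" shows "odd (\<Sum>i<n. l ^ i)"
proof (cases "even l")
  case True
  have "n \<ge> 1 \<Longrightarrow> odd (\<Sum>i<n. l ^ i)" for n
  proof (induction n)
    case 0 then show ?case by simp
  next
    case (Suc n)
    show ?case
    proof (cases "n = 0")
      case True then show ?thesis by simp
    next
      case False
      then have "odd (\<Sum>i<n. l ^ i)" using Suc by simp
      moreover have "even (l ^ n)" using True False by simp
      ultimately show ?thesis by simp
    qed
  qed
  moreover have "n \<ge> 1" using assms by (cases n) auto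
  ultimately show ?thesis by blast
next
  case False
  have "even (\<Sum>i<k. l ^ i) \<longleftrightarrow> even k" for k
  proof (induction k)
    case 0 then show ?case by simp
  next
    case (Suc k)
    have "odd (l ^ k)" using False by simp
    then show ?case using Suc False by simp
  qed
  then show ?thesis using assms by simp
qed

lemma dvd_small_zero:
  fixes x M :: int assumes "M dvd x" "0 \<le> x" "x < M" shows "x = 0"
  using assms by (metis dvd_imp_le_int le_less not_le zdvd_imp_le)

theorem proposition5:
  fixes p q :: int and e n :: nat
  assumes "p > 0" and "q > 0" and "e > 0"
    and "n > 1" and "is_cycle_length p q e n"
  shows "\<exists>k::int. catH p q n = 2 * real_of_int k"
proof -
  define A where "A = p * q + 2"
  define M :: int where "M = 2 ^ e"
  obtain v where v: "v \<in> cat_points e" and vn: "(cat_map p q e ^^ n) v = v"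
    and vmin: "\<forall>m. 0 < m \<and> m < n \<longrightarrow> (cat_map p q e ^^ m) v \<noteq> v"
    using assms(5) unfolding is_cycle_length_def by blast
  obtain x y where xy: "v = (x, y)" by (cases v)
  have x0: "0 \<le> x" "x < M" and y0: "0 \<le> y" "y < M"
    using v unfolding xy cat_points_def M_def by auto
  have xm: "x mod M = x" "y mod M = y" using x0 y0 by simp_all
  have not1: "(cat_map p q e ^^ 1) (x, y) \<noteq> (x, y)" using vmin assms(4) xy by auto
  define c1 where "c1 = x + p * y"
  define c2 where "c2 = q * x + (1 + p * q) * y"
  define H where "H = hh A n"
  define G where "G = hh A (n - 1)"
  have nS: "n = Suc (n - 1)" using assms(4) by simp
  have "even H"
  proof (rule ccontr)
    assume oH: "odd H"
    have "(cat_map p q e ^^ Suc (n - 1)) (x, y) = (x, y)" using vn xy nS by simp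
    then have "(H * c1 - G * x) mod M = x mod M" "(H * c2 - G * y) mod M = y mod M"
      using iter_formula[where p=p and q=q and e=e and m="n - 1" and x=x and y=y] nS xm
      unfolding H_def G_def A_def c1_def c2_def M_def by simp_all
    then have h1: "M dvd H * c1 - (1 + G) * x" and h2: "M dvd H * c2 - (1 + G) * y"
      by (simp_all add: mod_eq_dvd_iff algebra_simps)
    have "coprime H M" unfolding M_def using odd_coprime_pow2[OF oH] .
    then have "gcd H M = 1" by simp
    then obtain u w where uw: "u * H + w * M = 1" using bezout_int[of H M] by auto
    define l where "l = u * (1 + G)"
    have i1: "c1 - l * x = u * (H * c1 - (1 + G) * x) + M * (w * c1)"
      using uw unfolding l_def by (simp add: algebra_simps) (metis (no_types, lifting) mult.commute mult.left_commute ring_class.ring_distribs(1) mult_1_right add_diff_cancel_left')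
    have d1: "M dvd c1 - l * x" unfolding i1 using h1 by simp
    have i2: "c2 - l * y = u * (H * c2 - (1 + G) * y) + M * (w * c2)"
      using uw unfolding l_def by (simp add: algebra_simps) (metis (no_types, lifting) mult.commute mult.left_commute ring_class.ring_distribs(1) mult_1_right add_diff_cancel_left')
    have d2: "M dvd c2 - l * y" unfolding i2 using h2 by simp
    show False
    proof (cases "even A")
      case False
      define Q where "Q = l^2 - A * l + 1"
      have oQ: "odd Q"
      proof (cases "even l")
        case True then show ?thesis unfolding Q_def by simp
      next
        case False
        then have "even (l - A)" using \<open>odd A\<close> by simp
        then have "even (l * (l - A))" by simp
        moreover have "l^2 - A * l + 1 = l * (l - A) + 1" by (simp add: algebra_simps power2_eq_square)
        ultimately show ?thesis unfolding Q_def by simp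
      qed
      have qx: "Q * x = A * (c1 - l*x) - (c1 - l*x) - p * (c2 - l*y) - l * (c1 - l*x)"
        unfolding Q_def A_def c1_def c2_def by (simp add: algebra_simps power2_eq_square)
      have qy: "Q * y = A * (c2 - l*y) - q * (c1 - l*x) - (1 + p*q) * (c2 - l*y) - l * (c2 - l*y)"
        unfolding Q_def A_def c1_def c2_def by (simp add: algebra_simps power2_eq_square)
      have "M dvd Q * x" unfolding qx using d1 d2 by simp
      then have "M dvd x" using dvd_cancel_odd[OF oQ] unfolding M_def by blast
      then have "x = 0" using dvd_small_zero x0 by blast
      have "M dvd Q * y" unfolding qy using d1 d2 by simp
      then have "M dvd y" using dvd_cancel_odd[OF oQ] unfolding M_def by blast
      then have "y = 0" using dvd_small_zero y0 by blast
      have "(cat_map p q e ^^ 1) (x, y) = (x, y)"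
        using \<open>x = 0\<close> \<open>y = 0\<close> by (simp add: cat_map_def)
      then show False using not1 by simp
    next
      case True
      have "odd n" using hh_even_parity[OF True, of n] oH unfolding H_def by simp
      have ev: "(cat_map p q e ^^ m) (x, y) = ((l^m * x) mod M, (l^m * y) mod M)" for m
        using eigen_iter[where x=x and e=e and y=y and p=p and l=l and q=q and m=m] x0 y0 d1 d2 unfolding M_def c1_def c2_def by simp
      define S where "S = (\<Sum>i<n. l ^ i)"
      have oS: "odd S" unfolding S_def using geom_odd[OF \<open>odd n\<close>] .
      have ln: "l ^ n - 1 = S * (l - 1)"
        using one_diff_power_eq[of l n] unfolding S_def by (simp add: algebra_simps)
      have "((l^n * x) mod M, (l^n * y) mod M) = (x, y)" using ev[of n] vn xy by simp
      then have "(l^n * x) mod M = x mod M" "(l^n * y) mod M = y mod M" using xm by simp_all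
      then have "M dvd (l^n - 1) * x" "M dvd (l^n - 1) * y"
        by (simp_all add: mod_eq_dvd_iff algebra_simps)
      then have "M dvd S * ((l - 1) * x)" "M dvd S * ((l - 1) * y)"
        unfolding ln by (simp_all add: mult.assoc)
      then have "M dvd (l - 1) * x" "M dvd (l - 1) * y"
        using dvd_cancel_odd[OF oS] unfolding M_def by blast+
      then have "(l * x) mod M = x mod M" "(l * y) mod M = y mod M"
        by (simp_all add: mod_eq_dvd_iff algebra_simps)
      then have "(cat_map p q e ^^ 1) (x, y) = (x, y)" using ev[of 1] xm by simp
      then show False using not1 by simp
    qed
  qed
  then obtain k where "H = 2 * k" by (rule evenE)
  then have "catH p q n = 2 * real_of_int k"
    using catH_int[OF assms(1,2), of n] unfolding H_def A_def by simp
  then show ?thesis by blast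
qed

end
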